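(* Let $q$, $\phi,\theta$ and $U_1=(P_1,Q_1,R_1)^T$ be as in the context and $\lambda\in(0,\infty)$. Then (i) $4P_1(x,\lambda)R_1(x,\lambda)-Q_1(x,\lambda)^2=4$ for all $x>0$; (ii) if $U_1=a^*((\theta')^2,-2\theta\theta',\theta^2)^T+b^*(\theta'\phi',-(\theta\phi'+\theta'\phi),\theta\phi)^T+c^*((\phi')^2,-2\phi\phi',\phi^2)^T$ with real $a^*,b^*,c^*$, then $4a^*c^*-(b^* )^2=4$.
   Context: $-y''+qy=\lambda y$ on $(0,\infty)$, $q(x)=\frac{q_0}{x^2}+\frac{q_1}{x}+\sum_{n\ge0}q_{n+2}x^n$ with real coefficients, series convergent on $(0,\infty)$, $q_0\ge-\tfrac14$, $q_0,q_1$ not both zero, $q(x)\to0$ as $x\to\infty$, and for some $x_0>0$ either $q\in L_1(x_0,\infty)$ or ($q'\in L_1(x_0,\infty)$, $q\in AC_{loc}[x_0,\infty)$). $\phi,\theta$ are the Frobenius solutions at $0$: with $q_0=\nu^2-\tfrac14$, $\nu\ge0$, $\phi=y_1$ is the Frobenius solution $x^{r}(1+\sum_{n\ge1}a_n(\lambda)x^n)$ for the larger indicial root $r=\tfrac12+\nu$, $y_2$ is a second (possibly logarithmic) Frobenius solution with leading coefficient $1$ and coefficients real polynomials in $\lambda$ (as given by the Frobenius method), $C=W(y_1,y_2)$ is the nonzero real constant Wronskian ($-2\nu$, $-(2\ell+1)$ when $q_0=\ell(\ell+1)$, $-2N$ when $q_0=N^2-\frac14$, $N\ge1$, or $1$ when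 $q_0=-\frac14$), and $\theta=y_2/C$, so $W(\phi,\theta)=\phi\theta'-\phi'\theta=1$. Appell system: $(P,Q,R)'=M(P,Q,R)^T$ with $M=\begin{pmatrix}0&\lambda-q&0\\-2&0&2(\lambda-q)\\0&-1&0\end{pmatrix}$; $U_1$ is its unique solution with $\lim_{x\to\infty}U_1=(\sqrt\lambda,0,1/\sqrt\lambda)^T$. *)

theory Defs
  imports "HOL-Analysis.Analysis"
begin

definition abs_continuous_on :: "real \<Rightarrow> real \<Rightarrow> (real \<Rightarrow> real) \<Rightarrow> bool" where
  "abs_continuous_on a b f \<longleftrightarrow>
     (\<forall>\<epsilon>>0. \<exists>\<delta>>0. \<forall>(n::nat) (u::nat \<Rightarrow> real) v.
        (\<forall>i<n. a \<le> u i \<and> u i < v i \<and> v i \<le> b) \<longrightarrow>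
        (\<forall>i<n. \<forall>j<n. i \<noteq> j \<longrightarrow> v i \<le> u j \<or> v j \<le> u i) \<longrightarrow>
        (\<Sum>i<n. v i - u i) < \<delta> \<longrightarrow> (\<Sum>i<n. \<bar>f (v i) - f (u i)\<bar>) < \<epsilon>)"

text \<open>Standing hypotheses on the potential q with Laurent-type coefficients q0, q1 and
  c n = q_(n+2).\<close>
definition potential_hyp :: "(real \<Rightarrow> real) \<Rightarrow> real \<Rightarrow> real \<Rightarrow> (nat \<Rightarrow> real) \<Rightarrow> bool" where
  "potential_hyp q q0 q1 c \<longleftrightarrow>
     (\<forall>x>0. summable (\<lambda>n. c n * x ^ n) \<and>
            q x = q0 / x\<^sup>2 + q1 / x + (\<Sum>n. c n * x ^ n)) \<and>
     q0 \<ge> -1/4 \<and> (q0 \<noteq> 0 \<or> q1 \<noteq> 0) \<and>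
     (q \<longlongrightarrow> 0) at_top \<and>
     (\<exists>x0>0. set_integrable lborel {x0..} q \<or>
        (set_integrable lborel {x0..} (deriv q) \<and> (\<forall>b>x0. abs_continuous_on x0 b q)))"

definition is_solution :: "(real \<Rightarrow> real) \<Rightarrow> real \<Rightarrow> (real \<Rightarrow> real) \<Rightarrow> bool" where
  "is_solution q lam y \<longleftrightarrow>
     (\<forall>x>0. (y has_real_derivative deriv y x) (at x) \<and>
            (deriv y has_real_derivative ((q x - lam) * y x)) (at x))"

text \<open>nu >= 0 with q0 = nu^2 - 1/4.\<close>
definition frob_nu :: "real \<Rightarrow> real" where
  "frob_nu q0 = sqrt (q0 + 1/4)"

definition is_frob_phi :: "(real \<Rightarrow> real) \<Rightarrow> real \<Rightarrow> real \<Rightarrow> (real \<Rightarrow> real) \<Rightarrow> bool" where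
  "is_frob_phi q q0 lam \<phi> \<longleftrightarrow> is_solution q lam \<phi> \<and>
     (\<exists>a::nat \<Rightarrow> real. \<forall>x>0. summable (\<lambda>n. a n * x ^ (n+1)) \<and>
        \<phi> x = x powr (1/2 + frob_nu q0) * (1 + (\<Sum>n. a n * x ^ (n+1))))"

text \<open>For nu > 0:  y2 = x^(1/2-nu) (1 + sum_(n>=1) b_n x^n) + kappa phi ln x
  (kappa = 0 is forced unless 2 nu is an integer).\<close>
definition is_frob_y2 :: "(real \<Rightarrow> real) \<Rightarrow> real \<Rightarrow> real \<Rightarrow> (real \<Rightarrow> real) \<Rightarrow> (real \<Rightarrow> real) \<Rightarrow> bool" where
  "is_frob_y2 q q0 lam \<phi> y2 \<longleftrightarrow> is_solution q lam y2 \<and>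
     (\<exists>(b::nat \<Rightarrow> real) \<kappa>. \<forall>x>0. summable (\<lambda>n. b n * x ^ (n+1)) \<and>
        (if frob_nu q0 = 0
         then y2 x = \<phi> x * ln x + x powr (1/2) * (\<Sum>n. b n * x ^ (n+1))
         else y2 x = x powr (1/2 - frob_nu q0) * (1 + (\<Sum>n. b n * x ^ (n+1)))
                     + \<kappa> * \<phi> x * ln x))"

text \<open>The Wronskian constant C = W(y1,y2).\<close>
definition frob_C :: "real \<Rightarrow> real" where
  "frob_C q0 = (if frob_nu q0 = 0 then 1 else - 2 * frob_nu q0)"

definition appell_solution :: "(real \<Rightarrow> real) \<Rightarrow> real \<Rightarrow> (real \<Rightarrow> real) \<Rightarrow> (real \<Rightarrow> real) \<Rightarrow> (real \<Rightarrow> real) \<Rightarrow> bool" where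
  "appell_solution q lam P Q R \<longleftrightarrow>
     (\<forall>x>0. (P has_real_derivative ((lam - q x) * Q x)) (at x) \<and>
            (Q has_real_derivative (-2 * P x + 2 * (lam - q x) * R x)) (at x) \<and>
            (R has_real_derivative (- Q x)) (at x))"

end

theory Submission imports Defs begin
lemma series_facts:
  fixes a :: "nat \<Rightarrow> real"
  assumes h: "\<forall>x>0. summable (\<lambda>n. a n * x ^ (n+1))"
  shows "\<And>y. summable (\<lambda>n. a n * y ^ n)"
    and "\<And>x. ((\<lambda>x. \<Sum>n. a n * x^n) has_real_derivative (\<Sum>n. diffs a n * x^n)) (at x)"
    and "\<And>x. isCont (\<lambda>x. \<Sum>n. a n * x^n) x"
    and "\<And>x. isCont (\<lambda>x. \<Sum>n. diffs a n * x^n) x"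
    and "\<And>x. x > 0 \<Longrightarrow> (\<Sum>n. a n * x^(n+1)) = x * (\<Sum>n. a n * x^n)"
proof -
  show s: "summable (\<lambda>n. a n * y ^ n)" for y
  proof -
    have K: "\<bar>y\<bar> + 1 > 0" by simp
    have "summable (\<lambda>n. (\<bar>y\<bar>+1) * (a n * (\<bar>y\<bar>+1) ^ n))"
      using h[rule_format, OF K] by (simp add: algebra_simps)
    hence "summable (\<lambda>n. a n * (\<bar>y\<bar>+1) ^ n)" using K by (simp add: summable_cmult_iff)
    thus ?thesis by (rule powser_inside) auto
  qed
  show d: "((\<lambda>x. \<Sum>n. a n * x^n) has_real_derivative (\<Sum>n. diffs a n * x^n)) (at x)" for x
    by (rule termdiffs_strong_converges_everywhere) (rule s)
  show "isCont (\<lambda>x. \<Sum>n. a n * x^n) x" for x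
    using d by (rule DERIV_isCont)
  have s2: "summable (\<lambda>n. diffs a n * y ^ n)" for y
    by (rule termdiff_converges_all) (rule s)
  show "isCont (\<lambda>x. \<Sum>n. diffs a n * x^n) x" for x
    by (rule DERIV_isCont, rule termdiffs_strong_converges_everywhere) (rule s2)
  show "(\<Sum>n. a n * x^(n+1)) = x * (\<Sum>n. a n * x^n)" for x
    using suminf_mult[OF s[of x], of x] by (simp add: algebra_simps)
qed

lemma wronski_const:
  assumes "is_solution q lam f" "is_solution q lam g"
  shows "\<exists>k. \<forall>x>0. f x * deriv g x - deriv f x * g x = k"
proof -
  have "((\<lambda>x. f x * deriv g x - deriv f x * g x) has_field_derivative 0) (at x within {0<..})"
    if "x \<in> {0<..}" for x
  proof -
    from that assms have f1: "(f has_real_derivative deriv f x) (at x)"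
      and f2: "(deriv f has_real_derivative ((q x - lam) * f x)) (at x)"
      and g1: "(g has_real_derivative deriv g x) (at x)"
      and g2: "(deriv g has_real_derivative ((q x - lam) * g x)) (at x)"
      by (auto simp: is_solution_def)
    have "((\<lambda>x. f x * deriv g x - deriv f x * g x) has_field_derivative
      (deriv f x * deriv g x + f x * ((q x - lam) * g x) - ((q x - lam) * f x * g x + deriv f x * deriv g x))) (at x)"
      using DERIV_diff[OF DERIV_mult[OF f1 g2] DERIV_mult[OF f2 g1]] by simp
    thus ?thesis by (auto intro: has_field_derivative_at_within simp: algebra_simps)
  qed
  then obtain k where "\<forall>x\<in>{0<..}. f x * deriv g x - deriv f x * g x = k"
    using has_field_derivative_zero_constant[of "{0<..}::real set"] by blast
  thus ?thesis by auto
qed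

lemma alg0:
  fixes x t F F' G G' L r :: real
  assumes "x>0" "t>0" "t*t = x" "r = 1/2"
  shows "(t*F) * ((((r)*(t/x)*F + t*F')*L + t*F*inverse x) + ((1/2)*(t/x)*(G-1) + t*G'))
       - ((r)*(t/x)*F + t*F') * (t*F*L + t*(G-1)) = F^2 + x*(F*G' - F'*(G-1))"
proof -
  from assms(3) have xt: "x = t*t" by simp
  show ?thesis using assms(2) unfolding xt assms(4) by (simp add: field_simps power2_eq_square)
qed
lemma alg1:
  fixes x t F F' G G' L \<kappa> \<nu> :: real
  assumes "x>0" "t>0"
  shows "(t*F) * (((1/2-\<nu>)*(1/t)*G + (x/t)*G') + \<kappa> * (((1/2+\<nu>)*(t/x)*F + t*F')*L + t*F*inverse x))
       - ((1/2+\<nu>)*(t/x)*F + t*F') * ((x/t)*G + \<kappa>*(t*F)*L)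
       = (-2*\<nu>)*F*G + x*(F*G' - F'*G) + \<kappa>*(t*t/x)*F^2"
  using assms by (simp add: field_simps power2_eq_square)

lemma cont_right: "isCont (f::real\<Rightarrow>real) 0 \<Longrightarrow> (f \<longlongrightarrow> f 0) (at_right 0)"
  unfolding isCont_def using tendsto_mono[OF at_within_le_at] by blast

lemma wronski_value:
  assumes hq0: "q0 \<ge> -1/4" and hphi: "is_frob_phi q q0 lam \<phi>" and hy2: "is_frob_y2 q q0 lam \<phi> y2"
  shows "\<forall>x>0. \<phi> x * deriv y2 x - deriv \<phi> x * y2 x = frob_C q0"
proof -
  define \<nu> where "\<nu> = frob_nu q0"
  have nu0: "\<nu> \<ge> 0" using hq0 by (simp add: \<nu>_def frob_nu_def)
  have solphi: "is_solution q lam \<phi>" and soly2: "is_solution q lam y2"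
    using hphi hy2 by (auto simp: is_frob_phi_def is_frob_y2_def)
  obtain k where hk: "\<forall>x>0. \<phi> x * deriv y2 x - deriv \<phi> x * y2 x = k"
    using wronski_const[OF solphi soly2] by blast
  obtain a where ha0: "\<forall>x>0. summable (\<lambda>n. a n * x^(n+1)) \<and>
      \<phi> x = x powr (1/2+frob_nu q0) * (1 + (\<Sum>n. a n * x^(n+1)))"
    using hphi unfolding is_frob_phi_def by (elim conjE exE) (rule that)
  note ha = ha0[folded \<nu>_def]
  obtain b \<kappa> where hb0: "\<forall>x>0. summable (\<lambda>n. b n * x^(n+1)) \<and>
      (if frob_nu q0 = 0 then y2 x = \<phi> x * ln x + x powr (1/2) * (\<Sum>n. b n * x ^ (n+1))
       else y2 x = x powr (1/2 - frob_nu q0) * (1 + (\<Sum>n. b n * x ^ (n+1))) + \<kappa> * \<phi> x * ln x)"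
    using hy2 unfolding is_frob_y2_def by (elim conjE exE) (rule that)
  note hb = hb0[folded \<nu>_def]
  have sa: "\<forall>x>0. summable (\<lambda>n. a n * x^(n+1))" using ha by blast
  have sb: "\<forall>x>0. summable (\<lambda>n. b n * x^(n+1))" using hb by blast
  define A where "A = (\<lambda>x::real. \<Sum>n. a n * x^n)"
  define A' where "A' = (\<lambda>x::real. \<Sum>n. diffs a n * x^n)"
  define B where "B = (\<lambda>x::real. \<Sum>n. b n * x^n)"
  define B' where "B' = (\<lambda>x::real. \<Sum>n. diffs b n * x^n)"
  define F where "F = (\<lambda>x. 1 + x * A x)"
  define F' where "F' = (\<lambda>x. A x + x * A' x)"
  define G where "G = (\<lambda>x. 1 + x * B x)"
  define G' where "G' = (\<lambda>x. B x + x * B' x)"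
  note SA = series_facts[OF sa, folded A_def A'_def]
  note SB = series_facts[OF sb, folded B_def B'_def]
  have Fd: "(F has_real_derivative F' x) (at x)" for x
    unfolding F_def F'_def using DERIV_add[OF DERIV_const[of 1 "at x"] DERIV_mult[OF DERIV_ident SA(2)[of x]]]
    by (simp add: A'_def mult.commute)
  have Gd: "(G has_real_derivative G' x) (at x)" for x
    unfolding G_def G'_def using DERIV_add[OF DERIV_const[of 1 "at x"] DERIV_mult[OF DERIV_ident SB(2)[of x]]]
    by (simp add: B'_def mult.commute)
  have FL: "(F \<longlongrightarrow> 1) (at_right 0)"
    using cont_right[of F] unfolding F_def using SA(3) by (auto intro!: continuous_intros)
  have GL: "(G \<longlongrightarrow> 1) (at_right 0)"
    using cont_right[of G] unfolding G_def using SB(3) by (auto intro!: continuous_intros)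
  have F'L: "(F' \<longlongrightarrow> F' 0) (at_right 0)"
    using cont_right[of F'] unfolding F'_def using SA(3,4) by (auto intro!: continuous_intros)
  have G'L: "(G' \<longlongrightarrow> G' 0) (at_right 0)"
    using cont_right[of G'] unfolding G'_def using SB(3,4) by (auto intro!: continuous_intros)
  have phi_eq: "\<phi> x = x powr (1/2+\<nu>) * F x" if "x > 0" for x
    using ha that SA(5)[OF that] by (simp add: F_def A_def)
  have dphi: "deriv \<phi> x = (1/2+\<nu>) * x powr (1/2+\<nu>-1) * F x + x powr (1/2+\<nu>) * F' x"
    if x: "x > 0" for x
  proof -
    have "((\<lambda>x. x powr (1/2+\<nu>) * F x) has_real_derivative
        (1/2+\<nu>) * x powr (1/2+\<nu>-1) * F x + x powr (1/2+\<nu>) * F' x) (at x)"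
      using DERIV_mult[OF has_real_derivative_powr[OF x, of "1/2+\<nu>"] Fd] by (simp add: algebra_simps)
    hence "(\<phi> has_real_derivative
        (1/2+\<nu>) * x powr (1/2+\<nu>-1) * F x + x powr (1/2+\<nu>) * F' x) (at x)"
      by (rule has_field_derivative_transform_within_open[where S="{0<..}"])
         (use x phi_eq in auto)
    moreover have "(\<phi> has_real_derivative deriv \<phi> x) (at x)"
      using solphi x by (auto simp: is_solution_def)
    ultimately show ?thesis using DERIV_unique by blast
  qed
  have dy2: "(y2 has_real_derivative deriv y2 x) (at x)" if "x > 0" for x
    using soly2 that by (auto simp: is_solution_def)
  have dphi': "(\<phi> has_real_derivative deriv \<phi> x) (at x)" if "x > 0" for x
    using solphi that by (auto simp: is_solution_def)
  have ev0: "\<forall>\<^sub>F x in at_right (0::real). x > 0" by (rule eventually_at_right_less)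
  have Lim: "((\<lambda>x. \<phi> x * deriv y2 x - deriv \<phi> x * y2 x) \<longlongrightarrow> frob_C q0) (at_right 0)"
  proof (cases "\<nu> = 0")
    case True
    have y2_eq: "y2 x = \<phi> x * ln x + x powr (1/2) * (G x - 1)" if "x > 0" for x
      using hb that SB(5)[OF that] True by (simp add: G_def B_def)
    have E: "\<phi> x * deriv y2 x - deriv \<phi> x * y2 x = F x ^ 2 + x * (F x * G' x - F' x * (G x - 1))"
      if x: "x > 0" for x
    proof -
      have "((\<lambda>x. \<phi> x * ln x + x powr (1/2) * (G x - 1)) has_real_derivative
          (deriv \<phi> x * ln x + \<phi> x * inverse x) + ((1/2) * x powr (1/2 - 1) * (G x - 1) + x powr (1/2) * G' x)) (at x)"
        using DERIV_add[OF DERIV_mult[OF dphi'[OF x] DERIV_ln[OF x]]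
            DERIV_mult[OF has_real_derivative_powr[OF x, of "1/2"] DERIV_diff[OF Gd DERIV_const[of 1 "at x"]]]] by (simp add: algebra_simps)
      hence "(y2 has_real_derivative
          (deriv \<phi> x * ln x + \<phi> x * inverse x) + ((1/2) * x powr (1/2 - 1) * (G x - 1) + x powr (1/2) * G' x)) (at x)"
        by (rule has_field_derivative_transform_within_open[where S="{0<..}"])
           (use x y2_eq in auto)
      hence dy: "deriv y2 x = (deriv \<phi> x * ln x + \<phi> x * inverse x) + ((1/2) * x powr (1/2 - 1) * (G x - 1) + x powr (1/2) * G' x)"
        using DERIV_unique dy2[OF x] by blast
      define t where "t = x powr (1/2)"
      have tp: "t > 0" using x by (simp add: t_def)
      have t1: "x powr (1/2 - 1) = t / x" unfolding powr_diff using x by (simp add: t_def)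
      have t2: "t * t = x" unfolding t_def using x by (simp flip: powr_add)
      have p1: "x powr (1/2+\<nu>) = t" using True by (simp add: t_def)
      have p2: "x powr (1/2+\<nu>-1) = t / x" using True t1 by simp
      show ?thesis
        unfolding dy y2_eq[OF x] dphi[OF x] phi_eq[OF x] p2 p1 t1 t_def[symmetric]
        by (rule alg0[OF x tp t2]) (simp add: True)
    qed
    have "((\<lambda>x. F x ^ 2 + x * (F x * G' x - F' x * (G x - 1))) \<longlongrightarrow> 1 ^ 2 + 0 * (1 * G' 0 - F' 0 * (1 - 1))) (at_right 0)"
      by (intro tendsto_add tendsto_mult tendsto_diff tendsto_power tendsto_const FL GL F'L G'L tendsto_ident_at)
    hence "((\<lambda>x. F x ^ 2 + x * (F x * G' x - F' x * (G x - 1))) \<longlongrightarrow> frob_C q0) (at_right 0)"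
      using True by (simp add: frob_C_def \<nu>_def)
    thus ?thesis
      by (rule Lim_transform_eventually) (use ev0 in \<open>rule eventually_mono\<close>, simp add: E)
  next
    case False
    hence np: "\<nu> > 0" using nu0 by simp
    have y2_eq: "y2 x = x powr (1/2 - \<nu>) * G x + \<kappa> * \<phi> x * ln x" if "x > 0" for x
      using hb that SB(5)[OF that] False by (simp add: G_def B_def)
    have E: "\<phi> x * deriv y2 x - deriv \<phi> x * y2 x =
        (-2*\<nu>) * F x * G x + x * (F x * G' x - F' x * G x) + \<kappa> * x powr (2*\<nu>) * F x ^ 2"
      if x: "x > 0" for x
    proof -
      have "((\<lambda>x. x powr (1/2 - \<nu>) * G x + \<kappa> * (\<phi> x * ln x)) has_real_derivative
          ((1/2-\<nu>) * x powr (1/2-\<nu>-1) * G x + x powr (1/2-\<nu>) * G' x) + \<kappa> * (deriv \<phi> x * ln x + \<phi> x * inverse x)) (at x)"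
        using DERIV_add[OF DERIV_mult[OF has_real_derivative_powr[OF x, of "1/2-\<nu>"] Gd]
             DERIV_cmult[OF DERIV_mult[OF dphi'[OF x] DERIV_ln[OF x]]]] by (simp add: algebra_simps)
      hence "(y2 has_real_derivative
          ((1/2-\<nu>) * x powr (1/2-\<nu>-1) * G x + x powr (1/2-\<nu>) * G' x) + \<kappa> * (deriv \<phi> x * ln x + \<phi> x * inverse x)) (at x)"
        by (rule has_field_derivative_transform_within_open[where S="{0<..}"])
           (use x y2_eq in auto)
      hence dy: "deriv y2 x = ((1/2-\<nu>) * x powr (1/2-\<nu>-1) * G x + x powr (1/2-\<nu>) * G' x) + \<kappa> * (deriv \<phi> x * ln x + \<phi> x * inverse x)"
        using DERIV_unique dy2[OF x] by blast
      define t where "t = x powr (1/2+\<nu>)"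
      have tp: "t > 0" using x by (simp add: t_def)
      have t1: "x powr (1/2+\<nu>-1) = t / x"
      proof -
        show ?thesis unfolding powr_diff t_def using x by simp
      qed
      have t2: "x powr (1/2-\<nu>) = x / t"
      proof -
        have e: "1/2-\<nu> = 1 - (1/2+\<nu>)" by simp
        show ?thesis unfolding e powr_diff t_def using x by simp
      qed
      have t3: "x powr (1/2-\<nu>-1) = 1 / t"
      proof -
        have e: "1/2-\<nu>-1 = - (1/2+\<nu>)" by simp
        show ?thesis unfolding e powr_minus t_def by (simp add: inverse_eq_divide)
      qed
      have t4: "x powr (2*\<nu>) = t * t / x"
      proof -
        have e: "2*\<nu> = (1/2+\<nu>) + (1/2+\<nu>) - 1" by simp
        show ?thesis unfolding e powr_diff powr_add t_def using x by simp
      qed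
      show ?thesis
        unfolding dy y2_eq[OF x] dphi[OF x] phi_eq[OF x] t1 t2 t3 t4 t_def[symmetric]
        by (rule alg1[OF x tp])
    qed
    have pw: "((\<lambda>x::real. x powr (2*\<nu>)) \<longlongrightarrow> 0) (at_right 0)"
    proof (rule tendsto_zero_powrI[where b="2*\<nu>"])
      show "((\<lambda>x::real. x) \<longlongrightarrow> 0) (at_right 0)" by (rule tendsto_ident_at)
      show "((\<lambda>x::real. 2*\<nu>) \<longlongrightarrow> 2*\<nu>) (at_right 0)" by (rule tendsto_const)
      show "\<forall>\<^sub>F x in at_right (0::real). 0 \<le> x" using ev0 by (rule eventually_mono) simp
      show "0 < 2*\<nu>" using np by simp
    qed
    have "((\<lambda>x. (-2*\<nu>) * F x * G x + x * (F x * G' x - F' x * G x) + \<kappa> * x powr (2*\<nu>) * F x ^ 2)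
       \<longlongrightarrow> (-2*\<nu>) * 1 * 1 + 0 * (1 * G' 0 - F' 0 * 1) + \<kappa> * 0 * 1 ^ 2) (at_right 0)"
      by (intro tendsto_add tendsto_mult tendsto_diff tendsto_power tendsto_const FL GL F'L G'L pw tendsto_ident_at)
    hence "((\<lambda>x. (-2*\<nu>) * F x * G x + x * (F x * G' x - F' x * G x) + \<kappa> * x powr (2*\<nu>) * F x ^ 2)
       \<longlongrightarrow> frob_C q0) (at_right 0)"
      using False by (simp add: frob_C_def \<nu>_def)
    thus ?thesis
      by (rule Lim_transform_eventually) (use ev0 in \<open>rule eventually_mono\<close>, simp add: E)
  qed
  have "((\<lambda>x. \<phi> x * deriv y2 x - deriv \<phi> x * y2 x) \<longlongrightarrow> k) (at_right 0)"
    by (rule Lim_transform_eventually[OF tendsto_const]) (use ev0 in \<open>rule eventually_mono\<close>, simp add: hk)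
  hence "k = frob_C q0" using Lim tendsto_unique[of "at_right (0::real)"] by auto
  thus ?thesis using hk by simp
qed

lemma quad_id:
  fixes a b c u v u' v' :: real
  shows "4 * (a * u'\<^sup>2 + b * (u' * v') + c * v'\<^sup>2) * (a * u\<^sup>2 + b * (u * v) + c * v\<^sup>2)
     - (a * (-2 * u * u') + b * (- (u * v' + u' * v)) + c * (-2 * v * v'))\<^sup>2
     = (4*a*c - b\<^sup>2) * (u * v' - u' * v)\<^sup>2"
  by (simp add: power2_eq_square algebra_simps)

theorem mainTheorem8:
  fixes q :: "real \<Rightarrow> real" and q0 q1 :: real and c :: "nat \<Rightarrow> real"
    and lam :: real and \<phi> y2 \<theta> P Q R :: "real \<Rightarrow> real"
  assumes hq: "potential_hyp q q0 q1 c"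
    and hlam: "lam > 0"
    and hphi: "is_frob_phi q q0 lam \<phi>"
    and hy2: "is_frob_y2 q q0 lam \<phi> y2"
    and htheta: "\<theta> = (\<lambda>x. y2 x / frob_C q0)"
    and hU: "appell_solution q lam P Q R"
    and hP: "(P \<longlongrightarrow> sqrt lam) at_top"
    and hQ: "(Q \<longlongrightarrow> 0) at_top"
    and hR: "(R \<longlongrightarrow> 1 / sqrt lam) at_top"
  shows "(\<forall>x>0. 4 * P x * R x - (Q x)\<^sup>2 = 4) \<and>
         (\<forall>a b c' :: real.
            (\<forall>x>0. P x = a * (deriv \<theta> x)\<^sup>2 + b * (deriv \<theta> x * deriv \<phi> x) + c' * (deriv \<phi> x)\<^sup>2 \<and>
                   Q x = a * (-2 * \<theta> x * deriv \<theta> x) + b * (- (\<theta> x * deriv \<phi> x + deriv \<theta> x * \<phi> x))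
                         + c' * (-2 * \<phi> x * deriv \<phi> x) \<and>
                   R x = a * (\<theta> x)\<^sup>2 + b * (\<theta> x * \<phi> x) + c' * (\<phi> x)\<^sup>2)
            \<longrightarrow> 4 * a * c' - b\<^sup>2 = 4)"
proof
  show "\<forall>x>0. 4 * P x * R x - (Q x)\<^sup>2 = 4"
  proof -
    have "((\<lambda>x. 4 * P x * R x - (Q x)\<^sup>2) has_field_derivative 0) (at x within {0<..})"
      if "x \<in> {0<..}" for x
    proof -
      from that hU have p: "(P has_real_derivative ((lam - q x) * Q x)) (at x)"
        and qd: "(Q has_real_derivative (-2 * P x + 2 * (lam - q x) * R x)) (at x)"
        and r: "(R has_real_derivative (- Q x)) (at x)"
        by (auto simp: appell_solution_def)
      have "((\<lambda>x. 4 * P x * R x - (Q x)\<^sup>2) has_real_derivative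
         (4 * ((lam - q x) * Q x) * R x + 4 * P x * (- Q x)) - 2 * Q x * (-2 * P x + 2 * (lam - q x) * R x)) (at x)"
        using DERIV_diff[OF DERIV_mult[OF DERIV_cmult[OF p, of 4] r] DERIV_power[OF qd, of 2]]
        by (simp add: algebra_simps)
      thus ?thesis by (auto intro: has_field_derivative_at_within simp: algebra_simps)
    qed
    then obtain k where hk: "\<forall>x\<in>{0<..}. 4 * P x * R x - (Q x)\<^sup>2 = k"
      using has_field_derivative_zero_constant[of "{0<..}::real set"] by blast
    have l1: "((\<lambda>x. 4 * P x * R x - (Q x)\<^sup>2) \<longlongrightarrow> 4 * sqrt lam * (1 / sqrt lam) - 0\<^sup>2) at_top"
      by (intro tendsto_diff tendsto_mult tendsto_power tendsto_const hP hQ hR)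
    have "4 * sqrt lam * (1 / sqrt lam) - (0::real)\<^sup>2 = 4" using hlam by simp
    with l1 have l1': "((\<lambda>x. 4 * P x * R x - (Q x)\<^sup>2) \<longlongrightarrow> 4) at_top" by simp
    have "\<forall>\<^sub>F x in at_top. (0::real) < x" by (rule eventually_gt_at_top)
    hence l2: "((\<lambda>x. 4 * P x * R x - (Q x)\<^sup>2) \<longlongrightarrow> k) at_top"
      by (intro Lim_transform_eventually[OF tendsto_const]) (rule eventually_mono, assumption, simp add: hk)
    have "k = 4" using tendsto_unique[OF _ l2 l1'] by simp
    thus ?thesis using hk by simp
  qed
  note part1 = this
  show "\<forall>a b c' :: real.
            (\<forall>x>0. P x = a * (deriv \<theta> x)\<^sup>2 + b * (deriv \<theta> x * deriv \<phi> x) + c' * (deriv \<phi> x)\<^sup>2 \<and>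
                   Q x = a * (-2 * \<theta> x * deriv \<theta> x) + b * (- (\<theta> x * deriv \<phi> x + deriv \<theta> x * \<phi> x))
                         + c' * (-2 * \<phi> x * deriv \<phi> x) \<and>
                   R x = a * (\<theta> x)\<^sup>2 + b * (\<theta> x * \<phi> x) + c' * (\<phi> x)\<^sup>2)
            \<longrightarrow> 4 * a * c' - b\<^sup>2 = 4"
  proof (intro allI impI)
    fix a b c' :: real
    assume H: "\<forall>x>0. P x = a * (deriv \<theta> x)\<^sup>2 + b * (deriv \<theta> x * deriv \<phi> x) + c' * (deriv \<phi> x)\<^sup>2 \<and>
                   Q x = a * (-2 * \<theta> x * deriv \<theta> x) + b * (- (\<theta> x * deriv \<phi> x + deriv \<theta> x * \<phi> x))
                         + c' * (-2 * \<phi> x * deriv \<phi> x) \<and>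
                   R x = a * (\<theta> x)\<^sup>2 + b * (\<theta> x * \<phi> x) + c' * (\<phi> x)\<^sup>2"
    have hq0: "q0 \<ge> -1/4" using hq by (simp add: potential_hyp_def)
    have W: "\<phi> 1 * deriv y2 1 - deriv \<phi> 1 * y2 1 = frob_C q0"
      using wronski_value[OF hq0 hphi hy2] by simp
    have C0: "frob_C q0 \<noteq> 0"
    proof -
      have "frob_nu q0 \<ge> 0" using hq0 by (simp add: frob_nu_def)
      thus ?thesis by (simp add: frob_C_def)
    qed
    have "(y2 has_real_derivative deriv y2 1) (at 1)"
      using hy2 by (simp add: is_frob_y2_def is_solution_def)
    hence "(\<theta> has_real_derivative deriv y2 1 / frob_C q0) (at 1)"
      unfolding htheta by (rule DERIV_cdivide)
    hence dt: "deriv \<theta> 1 = deriv y2 1 / frob_C q0" by (rule DERIV_imp_deriv)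
    have th1: "\<theta> 1 = y2 1 / frob_C q0" using htheta by simp
    have w1: "\<theta> 1 * deriv \<phi> 1 - deriv \<theta> 1 * \<phi> 1 = -1"
    proof -
      have "\<theta> 1 * deriv \<phi> 1 - deriv \<theta> 1 * \<phi> 1 = - (\<phi> 1 * deriv y2 1 - deriv \<phi> 1 * y2 1) / frob_C q0"
        unfolding dt th1 using C0 by (simp add: field_simps)
      thus ?thesis using W C0 by simp
    qed
    have "4 * P 1 * R 1 - (Q 1)\<^sup>2 = 4" using part1 by simp
    moreover have "4 * P 1 * R 1 - (Q 1)\<^sup>2 = (4*a*c' - b\<^sup>2) * (\<theta> 1 * deriv \<phi> 1 - deriv \<theta> 1 * \<phi> 1)\<^sup>2"
      using H[rule_format, of 1] quad_id[of a "deriv \<theta> 1" b "deriv \<phi> 1" c' "\<theta> 1" "\<phi> 1"]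
      by (simp add: mult.assoc)
    ultimately show "4 * a * c' - b\<^sup>2 = 4" using w1 by simp
  qed
qed

end
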